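(* Let $2 \le k \le n$ be integers. Then $$N(OM,k,n)=\begin{cases} \left\lceil \frac{n-1}{k-1} \right\rceil & \text{if } n \text{ is even},\\[2pt] \left\lceil \frac{n-2}{k-1} \right\rceil & \text{if } n \text{ is odd.}\end{cases}$$
   Context: We are given $n$ balls, namely the set $[n]=\{1,\dots,n\}$, each colored with one of two colors (say red and blue) by an unknown coloring. A ball $i$ is a majority ball if more than $n/2$ balls have the same color as $i$. A query is a subset $Q\subseteq[n]$ with $|Q|=k$. In the Output (Partition) Model (OM), the answer to a query $Q$ is the unordered partition $\{Q',Q''\}$ of $Q$ into the set of balls of one color and the set of balls of the other color (one part may be empty), with no indication of which color is which. A non-adaptive strategy is a family of queries $Q_1,\dots,Q_q$ fixed in advance (all asked simultaneously). It succeeds if for every coloring and every sequence of answers consistent with it, the answers determine the outcome: either every coloring consistent with these answers has no majority ball (and then we declare that there is none), or there is a ball that is a majority ball in every coloring consistent with these answers. $N(OM,k,n)$ denotes the minimum number $q$ of queries in a successful non-adaptive strategy in this model. *)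

theory Defs
  imports Complex_Main
begin

text \<open>Balls are 1..n; a coloring is a map to bool (two colors).
  Only the values on 1..n matter.\<close>

definition is_majority_ball :: "nat \<Rightarrow> (nat \<Rightarrow> bool) \<Rightarrow> nat \<Rightarrow> bool" where
  "is_majority_ball n c i \<longleftrightarrow> i \<in> {1..n} \<and> 2 * card {j \<in> {1..n}. c j = c i} > n"

text \<open>Answer in the Output (Partition) Model: the unordered partition of Q
  into its two color classes (one may be empty).\<close>
definition om_answer :: "(nat \<Rightarrow> bool) \<Rightarrow> nat set \<Rightarrow> nat set set" where
  "om_answer c Q = {{i \<in> Q. c i}, {i \<in> Q. \<not> c i}}"

definition om_consistent :: "nat \<Rightarrow> nat set list \<Rightarrow> (nat \<Rightarrow> bool) \<Rightarrow> (nat \<Rightarrow> bool) \<Rightarrow> bool" where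
  "om_consistent n Qs c c' \<longleftrightarrow> (\<forall>Q \<in> set Qs. om_answer c' Q = om_answer c Q)"

text \<open>A non-adaptive strategy (list of queries) succeeds if for every coloring c
  the answers determine the outcome.  Colorings are compared only on 1..n.\<close>
definition om_successful :: "nat \<Rightarrow> nat \<Rightarrow> nat set list \<Rightarrow> bool" where
  "om_successful k n Qs \<longleftrightarrow>
     (\<forall>Q \<in> set Qs. Q \<subseteq> {1..n} \<and> card Q = k) \<and>
     (\<forall>c. (\<forall>c'. om_consistent n Qs c c' \<longrightarrow> (\<forall>i. \<not> is_majority_ball n c' i))
        \<or> (\<exists>i. \<forall>c'. om_consistent n Qs c c' \<longrightarrow> is_majority_ball n c' i))"

definition N_OM :: "nat \<Rightarrow> nat \<Rightarrow> nat" where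
  "N_OM k n = (LEAST q. \<exists>Qs. length Qs = q \<and> om_successful k n Qs)"

end

theory Submission
  imports Defs
begin


definition qclosed :: "nat set list \<Rightarrow> nat set \<Rightarrow> bool" where
  "qclosed Qs B \<longleftrightarrow> (\<forall>Q\<in>set Qs. Q \<subseteq> B \<or> Q \<inter> B = {})"

lemma partition_exists:
  assumes "\<forall>Q\<in>set Qs. Q \<subseteq> U \<and> card Q = k" "finite U" "k \<ge> 1"
  shows "\<exists>P. finite P \<and> \<Union>P = U \<and> (\<forall>B\<in>P. B \<noteq> {} \<and> qclosed Qs B)
     \<and> (\<forall>A\<in>P. \<forall>B\<in>P. A \<noteq> B \<longrightarrow> A \<inter> B = {}) \<and> card U \<le> card P + length Qs * (k-1)"
  using assms
proof (induction Qs)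
  case Nil
  show ?case by (rule exI[of _ "(\<lambda>i. {i}) ` U"]) (use Nil in \<open>auto simp: qclosed_def card_image\<close>)
next
  case (Cons Q Qs)
  from Cons obtain P where P: "finite P" "\<Union>P = U" "\<forall>B\<in>P. B \<noteq> {} \<and> qclosed Qs B"
    "\<forall>A\<in>P. \<forall>B\<in>P. A \<noteq> B \<longrightarrow> A \<inter> B = {}" "card U \<le> card P + length Qs * (k-1)" by auto
  have QU: "Q \<subseteq> U" and cQ: "card Q = k" using Cons.prems by auto
  have Qne: "Q \<noteq> {}" and finQ: "finite Q" using cQ Cons.prems(3) by (auto intro: card_ge_0_finite)
  define M where "M = {B\<in>P. B \<inter> Q \<noteq> {}}"
  define P' where "P' = insert (\<Union>M) (P - M)"
  have MP: "M \<subseteq> P" by (auto simp: M_def)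
  have finM: "finite M" using MP P(1) finite_subset by blast
  have QM: "Q \<subseteq> \<Union>M" using QU P(2) by (auto simp: M_def)
  have Mne: "M \<noteq> {}" using QM Qne by auto
  have cardM: "card M \<le> k"
  proof -
    define f where "f x = (SOME B. B \<in> P \<and> x \<in> B)" for x
    have "M \<subseteq> f ` Q"
    proof
      fix B assume "B \<in> M"
      then obtain x where x: "x \<in> B" "x \<in> Q" "B \<in> P" by (auto simp: M_def)
      have "f x \<in> P \<and> x \<in> f x" unfolding f_def by (rule someI[of _ B]) (use x in auto)
      then have "f x = B" using P(4) x by blast
      then show "B \<in> f ` Q" using x by blast
    qed
    then have "card M \<le> card (f ` Q)" using finQ by (simp add: card_mono)
    also have "\<dots> \<le> card Q" using finQ by (rule card_image_le)
    finally show ?thesis using cQ by simp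
  qed
  have cardM1: "card M \<ge> 1" using Mne finM by (simp add: Suc_leI card_gt_0_iff)
  have notin: "\<Union>M \<notin> P - M"
  proof
    assume "\<Union>M \<in> P - M"
    then have "\<Union>M \<inter> Q = {}" by (auto simp: M_def)
    then show False using QM Qne by blast
  qed
  have cardP': "card P' = card P - card M + 1"
    using notin P(1) MP finM by (simp add: P'_def card_Diff_subset)
  have cMP: "card M \<le> card P" using MP P(1) by (simp add: card_mono)
  show ?case
  proof (rule exI[of _ P'], intro conjI)
    show "finite P'" using P(1) by (simp add: P'_def)
    show "\<Union>P' = U" using P(2) MP by (auto simp: P'_def)
    show "\<forall>B\<in>P'. B \<noteq> {} \<and> qclosed (Q # Qs) B"
    proof
      fix B assume "B \<in> P'"
      then consider "B = \<Union>M" | "B \<in> P - M" by (auto simp: P'_def)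
      then show "B \<noteq> {} \<and> qclosed (Q # Qs) B"
      proof cases
        case 1
        have "qclosed Qs (\<Union>M)"
          unfolding qclosed_def
        proof
          fix Q' assume Q': "Q' \<in> set Qs"
          show "Q' \<subseteq> \<Union>M \<or> Q' \<inter> \<Union>M = {}"
          proof (cases "\<exists>B\<in>M. Q' \<subseteq> B")
            case True then show ?thesis by blast
          next
            case False
            then have "\<forall>B\<in>M. Q' \<inter> B = {}" using P(3) MP Q' unfolding qclosed_def by blast
            then show ?thesis by blast
          qed
        qed
        then have "qclosed (Q # Qs) (\<Union>M)" using QM unfolding qclosed_def by simp
        moreover have "\<Union>M \<noteq> {}" using QM Qne by blast
        ultimately show ?thesis using 1 by simp
      next
        case 2
        then have "B \<in> P" "B \<notin> M" by auto
        then have "Q \<inter> B = {}" "B \<noteq> {}" "qclosed Qs B" using P(3) unfolding M_def by auto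
        then show ?thesis unfolding qclosed_def
        proof (intro conjI ballI)
          fix Q' assume "Q' \<in> set (Q # Qs)"
          then have "Q' = Q \<or> Q' \<in> set Qs" by simp
          then show "Q' \<subseteq> B \<or> Q' \<inter> B = {}"
            using \<open>Q \<inter> B = {}\<close> \<open>qclosed Qs B\<close> unfolding qclosed_def by blast
        qed (rule \<open>B \<noteq> {}\<close>)
      qed
    qed
    show "\<forall>A\<in>P'. \<forall>B\<in>P'. A \<noteq> B \<longrightarrow> A \<inter> B = {}"
    proof -
      have H: "\<forall>B\<in>P - M. B \<inter> \<Union>M = {}"
      proof
        fix B assume B: "B \<in> P - M"
        have "\<forall>B'\<in>M. B \<inter> B' = {}"
        proof
          fix B' assume "B' \<in> M"
          then have "B' \<in> P" "B \<in> P" "B \<noteq> B'" using B MP by auto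
          then show "B \<inter> B' = {}" using P(4) by simp
        qed
        then show "B \<inter> \<Union>M = {}" by blast
      qed
      show ?thesis
      proof (intro ballI impI)
        fix A B assume A: "A \<in> P'" and B: "B \<in> P'" and AB: "A \<noteq> B"
        have A': "A = \<Union>M \<or> A \<in> P - M" using A by (auto simp: P'_def)
        have B': "B = \<Union>M \<or> B \<in> P - M" using B by (auto simp: P'_def)
        show "A \<inter> B = {}"
        proof (cases "A = \<Union>M")
          case True
          then have "B \<in> P - M" using B' AB by auto
          then show ?thesis using H True by blast
        next
          case False
          then have Am: "A \<in> P - M" using A' by auto
          show ?thesis
          proof (cases "B = \<Union>M")
            case True
            then show ?thesis using H Am by blast
          next
            case False
            then have "B \<in> P - M" using B' by auto
            then show ?thesis using P(4) Am AB by blast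
          qed
        qed
      qed
    qed
    show "card U \<le> card P' + length (Q # Qs) * (k - 1)"
    proof -
      have "length (Q # Qs) * (k - 1) = length Qs * (k-1) + (k-1)" by simp
      then show ?thesis using P(5) cardP' cardM cardM1 cMP Cons.prems(3) by linarith
    qed
  qed
qed



definition flip :: "(nat \<Rightarrow> bool) \<Rightarrow> nat set \<Rightarrow> nat \<Rightarrow> bool" where
  "flip c F j = (c j \<noteq> (j \<in> F))"

lemma flip_consistent:
  assumes "qclosed Qs F"
  shows "om_consistent n Qs c (flip c F)"
  unfolding om_consistent_def
proof
  fix Q assume Q: "Q \<in> set Qs"
  then have "Q \<subseteq> F \<or> Q \<inter> F = {}" using assms unfolding qclosed_def by blast
  then show "om_answer (flip c F) Q = om_answer c Q"
  proof
    assume "Q \<subseteq> F"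
    then have "{i \<in> Q. flip c F i} = {i \<in> Q. \<not> c i}" "{i \<in> Q. \<not> flip c F i} = {i \<in> Q. c i}"
      unfolding flip_def by auto
    then show ?thesis unfolding om_answer_def by (simp add: insert_commute)
  next
    assume "Q \<inter> F = {}"
    then have "{i \<in> Q. flip c F i} = {i \<in> Q. c i}" "{i \<in> Q. \<not> flip c F i} = {i \<in> Q. \<not> c i}"
      unfolding flip_def by auto
    then show ?thesis unfolding om_answer_def by simp
  qed
qed

lemma consistent_refl: "om_consistent n Qs c c"
  unfolding om_consistent_def by simp

lemma fail_even:
  assumes ev: "even n" and cl: "qclosed Qs F" and FU: "F \<subseteq> {1..n}" and Fne: "F \<noteq> {}"
    and Fc: "2 * card F \<le> n"
  shows "\<not> om_successful k n Qs"
proof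
  assume S: "om_successful k n Qs"
  define U where "U = {1..n}"
  have finU: "finite U" "card U = n" by (auto simp: U_def)
  have finF: "finite F" using FU finite_subset by blast
  have cF1: "card F \<ge> 1" using finF Fne by (simp add: Suc_leI card_gt_0_iff)
  have cUF: "card (U - F) = n - card F" using FU finF finU by (simp add: U_def card_Diff_subset)
  have "n div 2 - card F \<le> card (U - F)" using cUF by simp
  then obtain G where G: "G \<subseteq> U - F" "card G = n div 2 - card F" "finite G"
    by (rule obtain_subset_with_card_n)
  define Rd where "Rd = F \<union> G"
  have RdU: "Rd \<subseteq> U" using G FU by (auto simp: Rd_def U_def)
  have FG: "F \<inter> G = {}" using G by auto
  have cRd: "card Rd = n div 2"
    using card_Un_disjoint[OF finF G(3) FG] G(2) Fc unfolding Rd_def by simp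
  define c where "c = (\<lambda>j. j \<in> Rd)"
  have nomaj: "\<not> is_majority_ball n c i" for i
  proof
    assume m: "is_majority_ball n c i"
    then have iU: "i \<in> U" by (simp add: is_majority_ball_def U_def)
    show False
    proof (cases "i \<in> Rd")
      case True
      then have "{j \<in> {1..n}. c j = c i} = Rd" using RdU by (auto simp: c_def U_def)
      then show False using m cRd ev by (simp add: is_majority_ball_def)
    next
      case False
      then have "{j \<in> {1..n}. c j = c i} = U - Rd" using RdU by (auto simp: c_def U_def)
      moreover have "card (U - Rd) = n - n div 2" using RdU cRd finU
        by (simp add: card_Diff_subset finite_subset)
      ultimately have "n < 2*(n - n div 2)" using m by (simp add: is_majority_ball_def)
      then show False using ev by presburger
    qed
  qed
  obtain i0 where i0: "i0 \<in> F" using Fne by blast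
  have maj: "is_majority_ball n (flip c F) i0"
  proof -
    have fi: "flip c F i0 = False" using i0 by (simp add: flip_def c_def Rd_def)
    have "{j \<in> {1..n}. flip c F j = flip c F i0} = U - G"
      using fi G FG by (auto simp: flip_def c_def Rd_def U_def)
    moreover have "card (U - G) = n - card G"
    proof -
      have "G \<subseteq> U" using G by auto
      then show ?thesis using finU G(3) by (simp add: card_Diff_subset)
    qed
    moreover have "i0 \<in> {1..n}" using i0 FU by auto
    ultimately show ?thesis using G(2) cF1 Fc ev unfolding is_majority_ball_def by auto
  qed
  from S have "(\<forall>c'. om_consistent n Qs c c' \<longrightarrow> (\<forall>i. \<not> is_majority_ball n c' i))
        \<or> (\<exists>i. \<forall>c'. om_consistent n Qs c c' \<longrightarrow> is_majority_ball n c' i)"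
    unfolding om_successful_def by blast
  then show False
  proof
    assume "\<forall>c'. om_consistent n Qs c c' \<longrightarrow> (\<forall>i. \<not> is_majority_ball n c' i)"
    then show False using maj flip_consistent[OF cl] by blast
  next
    assume "\<exists>i. \<forall>c'. om_consistent n Qs c c' \<longrightarrow> is_majority_ball n c' i"
    then show False using nomaj consistent_refl by blast
  qed
qed

lemma flip_minor:
  assumes RdU: "Rd \<subseteq> {1..n}" and cRd: "card Rd = (n+1) div 2" and XU: "X \<subseteq> {1..n}"
    and big: "2 * card (Rd \<inter> X) > card X" and i: "i \<in> Rd" "i \<notin> X" and od: "odd n"
  shows "\<not> is_majority_ball n (flip (\<lambda>j. j \<in> Rd) X) i"
proof -
  have finRd: "finite Rd" and finX: "finite X" using RdU XU finite_subset by auto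
  have "{j \<in> {1..n}. flip (\<lambda>j. j \<in> Rd) X j = flip (\<lambda>j. j \<in> Rd) X i} = (Rd - X) \<union> (X - Rd)"
    using i RdU XU by (auto simp: flip_def)
  moreover have "card ((Rd - X) \<union> (X - Rd)) = card (Rd - X) + card (X - Rd)"
    using finRd finX by (intro card_Un_disjoint) auto
  moreover have "card (Rd - X) = card Rd - card (Rd \<inter> X)"
    using finRd finX by (simp add: card_Diff_subset_Int)
  moreover have "card (X - Rd) = card X - card (Rd \<inter> X)"
    using finRd finX by (simp add: card_Diff_subset_Int Int_commute)
  moreover have "card (Rd \<inter> X) \<le> card Rd" "card (Rd \<inter> X) \<le> card X"
    using finRd finX by (auto intro: card_mono)
  ultimately have eq: "card {j \<in> {1..n}. flip (\<lambda>j. j \<in> Rd) X j = flip (\<lambda>j. j \<in> Rd) X i}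
      = (card Rd - card (Rd \<inter> X)) + (card X - card (Rd \<inter> X))" by simp
  obtain m where m: "n = 2*m+1" using od oddE by blast
  then have "card Rd = m + 1" using cRd by simp
  moreover define T where "T = (card Rd - card (Rd \<inter> X)) + (card X - card (Rd \<inter> X))"
  moreover have "T + 2 * card (Rd \<inter> X) = card Rd + card X"
    using \<open>card (Rd \<inter> X) \<le> card Rd\<close> \<open>card (Rd \<inter> X) \<le> card X\<close> unfolding T_def by simp
  ultimately have "\<not> n < 2 * T"
    using m big by linarith
  then have "\<not> n < 2 * ((card Rd - card (Rd \<inter> X)) + (card X - card (Rd \<inter> X)))"
    unfolding T_def .
  then show ?thesis unfolding is_majority_ball_def eq by simp
qed



lemma t1: "(x::nat) + y + c = n \<Longrightarrow> odd n \<Longrightarrow> (n+1) div 2 \<le> (x div 2 + 1) + (y div 2 + 1) + c"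
proof -
  assume a: "x + y + c = n" "odd n"
  obtain m where m: "n = 2*m+1" using a(2) oddE by blast
  have "x = 2*(x div 2) + x mod 2" "y = 2*(y div 2) + y mod 2" by simp_all
  moreover have "x mod 2 \<le> 1" "y mod 2 \<le> 1" by simp_all
  moreover have "(n+1) div 2 = m + 1" using m by simp
  ultimately show ?thesis using a(1) m by linarith
qed
lemma t2: "(x::nat) = 2*p+s \<Longrightarrow> y = 2*q+t \<Longrightarrow> z=2*w+u \<Longrightarrow> s \<le> 1 \<Longrightarrow> t \<le> 1 \<Longrightarrow> u \<le> 1 \<Longrightarrow> x \<ge> 1 \<Longrightarrow> y \<ge> 1 \<Longrightarrow> z \<ge> 1 \<Longrightarrow> x+y+z \<le> 2*m+1 \<Longrightarrow>
   p + q + 2 \<le> m + 1 \<or> p + w + 2 \<le> m+1 \<or> q + w + 2 \<le> m+1"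
proof -
  assume a: "x = 2*p+s" "y = 2*q+t" "z=2*w+u" "s \<le> 1" "t \<le> 1" "u \<le> 1" "x \<ge> 1" "y \<ge> 1" "z \<ge> 1" "x+y+z \<le> 2*m+1"
  have "1 \<le> p + s" using a by (cases p) auto
  moreover have "1 \<le> q + t" using a by (cases q) auto
  moreover have "1 \<le> w + u" using a by (cases w) auto
  ultimately show ?thesis using a by linarith
qed
lemma t3: "odd (n::nat) \<Longrightarrow> x \<ge> 1 \<Longrightarrow> y \<ge> 1 \<Longrightarrow> z \<ge> 1 \<Longrightarrow> x+y+z \<le> n \<Longrightarrow>
  x div 2 + y div 2 + 2 \<le> (n+1) div 2 \<or> x div 2 + z div 2 + 2 \<le> (n+1) div 2 \<or> y div 2 + z div 2 + 2 \<le> (n+1) div 2"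
proof -
  assume a: "odd n" "x \<ge> 1" "y \<ge> 1" "z \<ge> 1" "x+y+z \<le> n"
  obtain m where m: "n = 2*m+1" using a(1) oddE by blast
  have h: "(n+1) div 2 = m + 1" using m by simp
  show ?thesis unfolding h
    by (rule t2[of x "x div 2" "x mod 2" y "y div 2" "y mod 2" z "z div 2" "z mod 2"]) (use a m in auto)
qed

lemma fail_odd:
  assumes od: "odd n" and clA: "qclosed Qs A" and clB: "qclosed Qs B"
    and AU: "A \<subseteq> {1..n}" and BU: "B \<subseteq> {1..n}" and AB: "A \<inter> B = {}"
    and Ane: "A \<noteq> {}" and Bne: "B \<noteq> {}"
    and sz: "card A div 2 + card B div 2 + 2 \<le> (n+1) div 2"
  shows "\<not> om_successful k n Qs"
proof
  assume S: "om_successful k n Qs"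
  define U where "U = {1..n}"
  have finU: "finite U" "card U = n" by (auto simp: U_def)
  have finA: "finite A" and finB: "finite B" using AU BU finite_subset by auto
  have cA: "card A \<ge> 1" using finA Ane by (simp add: Suc_leI card_gt_0_iff)
  have cB: "card B \<ge> 1" using finB Bne by (simp add: Suc_leI card_gt_0_iff)
  define a where "a = card A div 2 + 1"
  define b where "b = card B div 2 + 1"
  define C where "C = U - A - B"
  have cC: "card C = n - card A - card B"
  proof -
    have "card (U - A) = n - card A" using AU finU finA by (simp add: U_def card_Diff_subset)
    moreover have "B \<subseteq> U - A" using AB BU by (auto simp: U_def)
    ultimately show ?thesis unfolding C_def using finB by (simp add: card_Diff_subset)
  qed
  have cAB: "card A + card B \<le> n"
  proof -
    have "card (A \<union> B) = card A + card B" using finA finB AB by (simp add: card_Un_disjoint)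
    moreover have "card (A \<union> B) \<le> n" using AU BU finU by (metis U_def card_mono le_sup_iff)
    ultimately show ?thesis by simp
  qed
  define r where "r = (n+1) div 2 - a - b"
  have "a \<le> card A" using cA by (simp add: a_def)
  then obtain RA where RA: "RA \<subseteq> A" "card RA = a" "finite RA" by (rule obtain_subset_with_card_n)
  have "b \<le> card B" using cB by (simp add: b_def)
  then obtain RB where RB: "RB \<subseteq> B" "card RB = b" "finite RB" by (rule obtain_subset_with_card_n)
  obtain m where m: "n = 2*m+1" using od oddE by blast
  have h: "(n+1) div 2 = m + 1" using m by simp
  have "(n+1) div 2 \<le> a + b + card C" unfolding a_def b_def
    by (rule t1) (use cC cAB od in simp_all)
  then have "r \<le> card C" unfolding r_def by linarith
  then obtain RC where RC: "RC \<subseteq> C" "card RC = r" "finite RC" by (rule obtain_subset_with_card_n)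
  define Rd where "Rd = RA \<union> RB \<union> RC"
  have RdU: "Rd \<subseteq> {1..n}" using RA RB RC AU BU by (auto simp: Rd_def C_def U_def)
  have cRd: "card Rd = (n+1) div 2"
  proof -
    have d1: "RA \<inter> RB = {}" using RA RB AB by auto
    have d2: "(RA \<union> RB) \<inter> RC = {}" using RA RB RC by (auto simp: C_def)
    have "card Rd = card RA + card RB + card RC"
      unfolding Rd_def using card_Un_disjoint[OF _ _ d2] card_Un_disjoint[OF _ _ d1] RA RB RC by simp
    moreover have "a + b \<le> (n+1) div 2" using sz by (simp add: a_def b_def)
    ultimately show ?thesis using RA RB RC unfolding r_def by simp
  qed
  have RdA: "Rd \<inter> A = RA" using RA RB RC AB by (auto simp: Rd_def C_def)
  have RdB: "Rd \<inter> B = RB" using RA RB RC AB by (auto simp: Rd_def C_def)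
  define c where "c = (\<lambda>j. j \<in> Rd)"
  have "Rd \<noteq> {}" using cRd h by auto
  then obtain i0 where i0: "i0 \<in> Rd" by blast
  have maj0: "is_majority_ball n c i0"
  proof -
    have "{j \<in> {1..n}. c j = c i0} = Rd" using i0 RdU by (auto simp: c_def)
    moreover have "n < 2 * ((n+1) div 2)" using h m by simp
    ultimately show ?thesis using cRd i0 RdU unfolding is_majority_ball_def by auto
  qed
  have nomaj: "\<exists>c'. om_consistent n Qs c c' \<and> \<not> is_majority_ball n c' i" for i
  proof (cases "i \<in> {1..n}")
    case False
    then show ?thesis using consistent_refl by (auto simp: is_majority_ball_def)
  next
    case iU: True
    show ?thesis
    proof (cases "i \<in> Rd")
      case False
      have "{j \<in> {1..n}. c j = c i} = U - Rd" using False RdU by (auto simp: c_def U_def)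
      moreover have "card (U - Rd) = n - (n+1) div 2" using RdU cRd finU
        by (simp add: card_Diff_subset finite_subset U_def)
      moreover have "\<not> n < 2 * (n - (n+1) div 2)" using h m by simp
      ultimately have "\<not> is_majority_ball n c i" unfolding is_majority_ball_def by simp
      then show ?thesis using consistent_refl by blast
    next
      case iRd: True
      show ?thesis
      proof (cases "i \<in> A")
        case False
        have "2 * card (Rd \<inter> A) > card A" using RdA RA by (simp add: a_def)
        then have "\<not> is_majority_ball n (flip c A) i"
          unfolding c_def using flip_minor[OF RdU cRd AU _ iRd False od] by simp
        then show ?thesis using flip_consistent[OF clA] by blast
      next
        case True
        then have iB: "i \<notin> B" using AB by blast
        have "2 * card (Rd \<inter> B) > card B" using RdB RB by (simp add: b_def)
        then have "\<not> is_majority_ball n (flip c B) i"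
          unfolding c_def using flip_minor[OF RdU cRd BU _ iRd iB od] by simp
        then show ?thesis using flip_consistent[OF clB] by blast
      qed
    qed
  qed
  from S have "(\<forall>c'. om_consistent n Qs c c' \<longrightarrow> (\<forall>i. \<not> is_majority_ball n c' i))
        \<or> (\<exists>i. \<forall>c'. om_consistent n Qs c c' \<longrightarrow> is_majority_ball n c' i)"
    unfolding om_successful_def by blast
  then show False
  proof
    assume "\<forall>c'. om_consistent n Qs c c' \<longrightarrow> (\<forall>i. \<not> is_majority_ball n c' i)"
    then show False using maj0 consistent_refl by blast
  next
    assume "\<exists>i. \<forall>c'. om_consistent n Qs c c' \<longrightarrow> is_majority_ball n c' i"
    then show False using nomaj by blast
  qed
qed



definition bq :: "nat \<Rightarrow> nat \<Rightarrow> nat \<Rightarrow> nat" where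
  "bq k n t = min (t*(k-1)) (n-k)"

definition chainQs :: "nat \<Rightarrow> nat \<Rightarrow> nat \<Rightarrow> nat set list" where
  "chainQs k n L = map (\<lambda>t. {bq k n t + 1 .. bq k n t + k}) [0..<L]"

lemma bq_le: "k \<le> n \<Longrightarrow> bq k n t + k \<le> n"
  unfolding bq_def by simp

lemma bq_0: "bq k n 0 = 0" unfolding bq_def by simp

lemma bq_Suc: "bq k n t \<le> bq k n (Suc t) \<and> bq k n (Suc t) \<le> bq k n t + (k - 1)"
proof -
  have g: "min T N \<le> min (T+K) N \<and> min (T+K) N \<le> min T N + K" for T N K :: nat
    by (simp add: min_def)
  have "Suc t * (k-1) = t*(k-1) + (k-1)" by simp
  then show ?thesis unfolding bq_def using g[of "t*(k-1)" "n-k" "k-1"] by simp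
qed

lemma chain_valid:
  assumes "k \<le> n" "Q \<in> set (chainQs k n L)"
  shows "Q \<subseteq> {1..n} \<and> card Q = k"
proof -
  obtain t where "Q = {bq k n t + 1 .. bq k n t + k}" using assms(2) by (auto simp: chainQs_def)
  then show ?thesis using bq_le[OF assms(1), of t] by auto
qed

lemma chain_mem: "t < L \<Longrightarrow> {bq k n t + 1 .. bq k n t + k} \<in> set (chainQs k n L)"
  unfolding chainQs_def by auto

lemma single_query:
  assumes "om_answer c' Q = om_answer c Q"
  shows "(\<forall>j\<in>Q. c' j = c j) \<or> (\<forall>j\<in>Q. c' j \<noteq> c j)"
proof -
  have "{i \<in> Q. c' i} \<in> om_answer c' Q" by (simp add: om_answer_def)
  then have "{i \<in> Q. c' i} \<in> om_answer c Q" using assms by simp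
  then have "{i \<in> Q. c' i} = {i \<in> Q. c i} \<or> {i \<in> Q. c' i} = {i \<in> Q. \<not> c i}"
    unfolding om_answer_def by simp
  then show ?thesis
  proof
    assume h: "{i \<in> Q. c' i} = {i \<in> Q. c i}"
    have "\<forall>j\<in>Q. c' j = c j"
    proof
      fix j assume "j \<in> Q"
      then show "c' j = c j" using h by blast
    qed
    then show ?thesis ..
  next
    assume h: "{i \<in> Q. c' i} = {i \<in> Q. \<not> c i}"
    have "\<forall>j\<in>Q. c' j \<noteq> c j"
    proof
      fix j assume "j \<in> Q"
      then show "c' j \<noteq> c j" using h by blast
    qed
    then show ?thesis ..
  qed
qed

lemma chain_uniform:
  assumes k2: "2 \<le> k" and kn: "k \<le> n" and cons: "om_consistent n (chainQs k n L) c c'"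
  shows "t < L \<Longrightarrow> \<forall>j\<in>{1..bq k n t + k}. (c' j = c j) = (c' 1 = c 1)"
proof (induction t)
  case 0
  have "{bq k n 0 + 1 .. bq k n 0 + k} \<in> set (chainQs k n L)" using 0 by (rule chain_mem)
  then have "om_answer c' {1..k} = om_answer c {1..k}" using cons unfolding om_consistent_def bq_0 by simp
  then have "(\<forall>j\<in>{1..k}. c' j = c j) \<or> (\<forall>j\<in>{1..k}. c' j \<noteq> c j)" by (rule single_query)
  moreover have one: "1 \<in> {1..k}" using k2 by simp
  ultimately have U0: "\<forall>j\<in>{1..k}. (c' j = c j) = (c' 1 = c 1)"
  proof (elim disjE)
    assume h: "\<forall>j\<in>{1..k}. c' j = c j"
    show ?thesis
    proof
      fix j assume "j \<in> {1..k}" then show "(c' j = c j) = (c' 1 = c 1)" using h one by simp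
    qed
  next
    assume h: "\<forall>j\<in>{1..k}. c' j \<noteq> c j"
    show ?thesis
    proof
      fix j assume "j \<in> {1..k}" then show "(c' j = c j) = (c' 1 = c 1)" using h one by simp
    qed
  qed
  have eq: "{1..bq k n 0 + k} = {1..k}" by (simp add: bq_0)
  show ?case unfolding eq by (rule U0)
next
  case (Suc t)
  have IH: "\<forall>j\<in>{1..bq k n t + k}. (c' j = c j) = (c' 1 = c 1)"
    by (rule Suc.IH[OF Suc_lessD[OF Suc.prems]])
  define b where "b = bq k n t"
  define b' where "b' = bq k n (Suc t)"
  have bb: "b \<le> b'" "b' \<le> b + (k-1)" using bq_Suc[of k n t] by (simp_all add: b_def b'_def)
  have "{b' + 1 .. b' + k} \<in> set (chainQs k n L)" unfolding b'_def using Suc.prems by (rule chain_mem)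
  then have "om_answer c' {b' + 1 .. b' + k} = om_answer c {b' + 1 .. b' + k}"
    using cons unfolding om_consistent_def by simp
  then have Q: "(\<forall>j\<in>{b' + 1 .. b' + k}. c' j = c j) \<or> (\<forall>j\<in>{b' + 1 .. b' + k}. c' j \<noteq> c j)"
    by (rule single_query)
  have x1: "b' + 1 \<in> {b' + 1 .. b' + k}" using k2 by simp
  have x2: "b' + 1 \<in> {1..b + k}" using bb k2 by simp
  have Qs: "\<forall>j\<in>{b' + 1 .. b' + k}. (c' j = c j) = (c' 1 = c 1)"
  proof -
    have "b'+1 \<in> {1..bq k n t + k}" using x2 unfolding b_def .
    then have s1: "(c' (b'+1) = c (b'+1)) = (c' 1 = c 1)" by (rule IH[rule_format])
    from Q show ?thesis
    proof (elim disjE)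
      assume h: "\<forall>j\<in>{b' + 1 .. b' + k}. c' j = c j"
      show ?thesis
      proof
        fix j assume j: "j \<in> {b' + 1 .. b' + k}"
        have a1: "c' j = c j" using h j by blast
        have a2: "c' (b'+1) = c (b'+1)" using h x1 by blast
        show "(c' j = c j) = (c' 1 = c 1)" using a1 a2 s1 by blast
      qed
    next
      assume h: "\<forall>j\<in>{b' + 1 .. b' + k}. c' j \<noteq> c j"
      show ?thesis
      proof
        fix j assume j: "j \<in> {b' + 1 .. b' + k}"
        have a1: "c' j \<noteq> c j" using h j by blast
        have a2: "c' (b'+1) \<noteq> c (b'+1)" using h x1 by blast
        show "(c' j = c j) = (c' 1 = c 1)" using a1 a2 s1 by blast
      qed
    qed
  qed
  show ?case unfolding b'_def[symmetric]
  proof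
    fix j assume j: "j \<in> {1..b' + k}"
    show "(c' j = c j) = (c' 1 = c 1)"
    proof (cases "j \<le> b + k")
      case True
      then have "j \<in> {1..bq k n t + k}" using j unfolding b_def by simp
      then show ?thesis by (rule IH[rule_format])
    next
      case False
      then have "j \<in> {b' + 1 .. b' + k}" using j bb by simp
      then show ?thesis by (rule Qs[rule_format])
    qed
  qed
qed

lemma chain_end:
  assumes "k \<le> n" "1 \<le> L" "1 \<le> k"
  shows "min (L*(k-1)+1) n \<le> bq k n (L-1) + k"
proof -
  obtain L' where L: "L = Suc L'" using assms(2) by (cases L) auto
  have "L*(k-1)+1 \<le> L'*(k-1) + k" using L assms(3) by (cases k) simp_all
  moreover have g: "min T (n-k) + k = min (T+k) n" for T using assms(1) by (simp add: min_def le_diff_conv2)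
  ultimately show ?thesis using L unfolding bq_def g by simp
qed

lemma chain_uniform_all:
  assumes k2: "2 \<le> k" and kn: "k \<le> n" and cons: "om_consistent n (chainQs k n L) c c'"
    and L: "1 \<le> L" and M: "M \<le> min (L*(k-1)+1) n"
  shows "\<forall>j\<in>{1..M}. (c' j = c j) = (c' 1 = c 1)"
proof -
  have "\<forall>j\<in>{1..bq k n (L-1) + k}. (c' j = c j) = (c' 1 = c 1)"
  proof -
    have "L - 1 < L" using L by simp
    then show ?thesis by (rule chain_uniform[OF k2 kn cons])
  qed
  moreover have "1 \<le> k" using k2 by simp
  then have "M \<le> bq k n (L-1) + k" using chain_end[OF kn L] M le_trans by blast
  ultimately show ?thesis
  proof (intro ballI)
    fix j assume A: "\<forall>j\<in>{1..bq k n (L-1) + k}. (c' j = c j) = (c' 1 = c 1)"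
      and B: "M \<le> bq k n (L-1) + k" and j: "j \<in> {1..M}"
    then have "j \<in> {1..bq k n (L-1) + k}" by simp
    then show "(c' j = c j) = (c' 1 = c 1)" by (rule A[rule_format])
  qed
qed



lemma succ_even:
  assumes k2: "2 \<le> k" and kn: "k \<le> n" and L: "1 \<le> L" and nL: "n \<le> L*(k-1)+1"
  shows "om_successful k n (chainQs k n L)"
  unfolding om_successful_def
proof (intro conjI allI)
  show "\<forall>Q\<in>set (chainQs k n L). Q \<subseteq> {1..n} \<and> card Q = k" using chain_valid[OF kn] by blast
  fix c :: "nat \<Rightarrow> bool"
  have same: "is_majority_ball n c' i = is_majority_ball n c i"
    if cons: "om_consistent n (chainQs k n L) c c'" for c' i
  proof -
    have U: "\<forall>j\<in>{1..n}. (c' j = c j) = (c' 1 = c 1)"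
      by (rule chain_uniform_all[OF k2 kn cons L]) (use nL in simp)
    show ?thesis
    proof (cases "i \<in> {1..n}")
      case True
      have e2: "(c' i = c i) = (c' 1 = c 1)" using True by (rule U[rule_format])
      have "{j\<in>{1..n}. c' j = c' i} = {j\<in>{1..n}. c j = c i}"
      proof (rule set_eqI)
        fix j
        show "j \<in> {j\<in>{1..n}. c' j = c' i} \<longleftrightarrow> j \<in> {j\<in>{1..n}. c j = c i}"
        proof (cases "j \<in> {1..n}")
          case True
          have e1: "(c' j = c j) = (c' 1 = c 1)" using True by (rule U[rule_format])
          have "(c' j = c' i) = (c j = c i)" using e1 e2 by blast
          then show ?thesis using True by simp
        qed auto
      qed
      then show ?thesis by (simp add: is_majority_ball_def)
    next
      case False
      then show ?thesis by (auto simp: is_majority_ball_def)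
    qed
  qed
  show "(\<forall>c'. om_consistent n (chainQs k n L) c c' \<longrightarrow> (\<forall>i. \<not> is_majority_ball n c' i)) \<or>
        (\<exists>i. \<forall>c'. om_consistent n (chainQs k n L) c c' \<longrightarrow> is_majority_ball n c' i)"
  proof (cases "\<exists>i. is_majority_ball n c i")
    case True
    then obtain i where "is_majority_ball n c i" by blast
    then show ?thesis using same by blast
  next
    case False
    then show ?thesis using same by blast
  qed
qed

lemma succ_odd:
  assumes k2: "2 \<le> k" and kn: "k \<le> n" and L: "1 \<le> L" and nL: "n - 1 \<le> L*(k-1)+1" and od: "odd n"
  shows "om_successful k n (chainQs k n L)"
  unfolding om_successful_def
proof (intro conjI allI)
  show "\<forall>Q\<in>set (chainQs k n L). Q \<subseteq> {1..n} \<and> card Q = k" using chain_valid[OF kn] by blast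
  fix c :: "nat \<Rightarrow> bool"
  define S where "S v = {j\<in>{1..n-1}. c j = v}" for v
  have n3: "n \<ge> 3" using od k2 kn by presburger
  have sub: "S (if c' 1 = c 1 then c' i else \<not> c' i) \<subseteq> {j\<in>{1..n}. c' j = c' i}"
    if cons: "om_consistent n (chainQs k n L) c c'" for c' i
  proof
    have U: "\<forall>j\<in>{1..n-1}. (c' j = c j) = (c' 1 = c 1)"
      by (rule chain_uniform_all[OF k2 kn cons L]) (use nL in simp)
    fix j assume j: "j \<in> S (if c' 1 = c 1 then c' i else \<not> c' i)"
    then have jU: "j \<in> {1..n-1}" and cj: "c j = (if c' 1 = c 1 then c' i else \<not> c' i)"
      by (auto simp: S_def)
    have e1: "(c' j = c j) = (c' 1 = c 1)" using jU by (rule U[rule_format])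
    have "c' j = c' i" using e1 cj by (cases "c' 1 = c 1") auto
    then show "j \<in> {j\<in>{1..n}. c' j = c' i}" using jU by auto
  qed
  have finS: "finite (S v)" for v by (simp add: S_def)
  have nS: "n \<notin> S v" for v using n3 by (auto simp: S_def)
  have sum: "card (S True) + card (S False) = n - 1"
  proof -
    have "S True \<union> S False = {1..n-1}" by (auto simp: S_def)
    moreover have "S True \<inter> S False = {}" by (auto simp: S_def)
    ultimately show ?thesis using card_Un_disjoint[OF finS finS, of True False] by simp
  qed
  have finC: "finite {j\<in>{1..n}. c' j = c' i}" for c' i by simp
  show "(\<forall>c'. om_consistent n (chainQs k n L) c c' \<longrightarrow> (\<forall>i. \<not> is_majority_ball n c' i)) \<or>
        (\<exists>i. \<forall>c'. om_consistent n (chainQs k n L) c c' \<longrightarrow> is_majority_ball n c' i)"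
  proof (cases "\<exists>v. n \<le> 2 * card (S v)")
    case True
    then obtain v where v: "n \<le> 2 * card (S v)" by blast
    then have "S v \<noteq> {}" using n3 by auto
    then obtain i where i: "i \<in> S v" by blast
    then have iU: "i \<in> {1..n}" and ci: "c i = v" by (auto simp: S_def)
    have "is_majority_ball n c' i" if cons: "om_consistent n (chainQs k n L) c c'" for c'
    proof -
      have U: "\<forall>j\<in>{1..n-1}. (c' j = c j) = (c' 1 = c 1)"
        by (rule chain_uniform_all[OF k2 kn cons L]) (use nL in simp)
      have "i \<in> {1..n-1}" using i by (simp add: S_def)
      then have e: "(c' i = c i) = (c' 1 = c 1)" by (rule U[rule_format])
      have "(if c' 1 = c 1 then c' i else \<not> c' i) = v" using e ci by (cases "c' 1 = c 1") auto
      then have "S v \<subseteq> {j\<in>{1..n}. c' j = c' i}" using sub[OF cons, of i] by simp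
      then have "card (S v) \<le> card {j\<in>{1..n}. c' j = c' i}" using finC by (rule card_mono[rotated])
      moreover have "2 * card (S v) \<noteq> n" using od by presburger
      ultimately show ?thesis using v iU unfolding is_majority_ball_def by linarith
    qed
    then show ?thesis by blast
  next
    case False
    then have a: "\<not> n \<le> 2 * card (S True)" "\<not> n \<le> 2 * card (S False)" by blast+
    then have hT: "2 * card (S True) = n - 1" and hF: "2 * card (S False) = n - 1" using sum by linarith+
    have h: "2 * card (S v) = n - 1" for v using hT hF by (cases v) simp_all
    have "is_majority_ball n c' n" if cons: "om_consistent n (chainQs k n L) c c'" for c'
    proof -
      let ?v = "if c' 1 = c 1 then c' n else \<not> c' n"
      have "insert n (S ?v) \<subseteq> {j\<in>{1..n}. c' j = c' n}" using sub[OF cons, of n] n3 by auto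
      then have "card (insert n (S ?v)) \<le> card {j\<in>{1..n}. c' j = c' n}" using finC by (rule card_mono[rotated])
      moreover have "card (insert n (S ?v)) = card (S ?v) + 1" using finS nS by simp
      ultimately show ?thesis using h[of ?v] n3 unfolding is_majority_ball_def by simp
    qed
    then show ?thesis by blast
  qed
qed



lemma blocks:
  assumes S: "om_successful k n Qs" and k2: "2 \<le> k"
  obtains P where "finite P" "\<Union>P = {1..n}" "\<forall>B\<in>P. B \<noteq> {} \<and> qclosed Qs B"
    "\<forall>A\<in>P. \<forall>B\<in>P. A \<noteq> B \<longrightarrow> A \<inter> B = {}" "n \<le> card P + length Qs * (k-1)"
proof -
  have "\<forall>Q\<in>set Qs. Q \<subseteq> {1..n} \<and> card Q = k" using S unfolding om_successful_def by blast
  moreover have "1 \<le> k" using k2 by simp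
  ultimately have "\<exists>P. finite P \<and> \<Union>P = {1..n} \<and> (\<forall>B\<in>P. B \<noteq> {} \<and> qclosed Qs B)
     \<and> (\<forall>A\<in>P. \<forall>B\<in>P. A \<noteq> B \<longrightarrow> A \<inter> B = {}) \<and> card {1..n} \<le> card P + length Qs * (k-1)"
    by (intro partition_exists) auto
  then show ?thesis using that by auto
qed

lemma lower_even:
  assumes S: "om_successful k n Qs" and k2: "2 \<le> k" and ev: "even n"
  shows "n - 1 \<le> length Qs * (k-1)"
proof (rule ccontr)
  assume "\<not> n - 1 \<le> length Qs * (k-1)"
  then have lt: "length Qs * (k-1) < n - 1" by simp
  obtain P where P: "finite P" "\<Union>P = {1..n}" "\<forall>B\<in>P. B \<noteq> {} \<and> qclosed Qs B"
    "\<forall>A\<in>P. \<forall>B\<in>P. A \<noteq> B \<longrightarrow> A \<inter> B = {}" "n \<le> card P + length Qs * (k-1)"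
    using blocks[OF S k2] by blast
  have "2 \<le> card P" using lt P(5) by linarith
  then obtain T where T: "T \<subseteq> P" "card T = 2" by (rule obtain_subset_with_card_n)
  then obtain B1 B2 where B: "T = {B1, B2}" "B1 \<noteq> B2" by (auto simp: card_2_iff)
  have B1P: "B1 \<in> P" and B2P: "B2 \<in> P" using T B by auto
  have QU: "\<forall>Q\<in>set Qs. Q \<subseteq> {1..n}" using S unfolding om_successful_def by blast
  have B1U: "B1 \<subseteq> {1..n}" using B1P P(2) by blast
  have B2U: "B2 \<subseteq> {1..n}" using B2P P(2) by blast
  have B1ne: "B1 \<noteq> {}" and cl1: "qclosed Qs B1" using B1P P(3) by auto
  have B2ne: "B2 \<noteq> {}" using B2P P(3) by auto
  have B12: "B1 \<inter> B2 = {}" using B1P B2P B(2) P(4) by blast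
  show False
  proof (cases "2 * card B1 \<le> n")
    case True
    then show False using fail_even[OF ev cl1 B1U B1ne True] S by blast
  next
    case False
    define F where "F = {1..n} - B1"
    have clF: "qclosed Qs F"
      unfolding qclosed_def
    proof
      fix Q assume Q: "Q \<in> set Qs"
      then have "Q \<subseteq> B1 \<or> Q \<inter> B1 = {}" using cl1 unfolding qclosed_def by blast
      moreover have "Q \<subseteq> {1..n}" using Q QU by blast
      ultimately show "Q \<subseteq> F \<or> Q \<inter> F = {}" unfolding F_def by blast
    qed
    have FU: "F \<subseteq> {1..n}" by (auto simp: F_def)
    have Fne: "F \<noteq> {}" using B2U B2ne B12 unfolding F_def by blast
    have "card F = n - card B1" unfolding F_def using B1U by (simp add: card_Diff_subset finite_subset)
    then have "2 * card F \<le> n" using False by linarith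
    then show False using fail_even[OF ev clF FU Fne] S by blast
  qed
qed

lemma lower_odd:
  assumes S: "om_successful k n Qs" and k2: "2 \<le> k" and od: "odd n"
  shows "n - 2 \<le> length Qs * (k-1)"
proof (rule ccontr)
  assume "\<not> n - 2 \<le> length Qs * (k-1)"
  then have lt: "length Qs * (k-1) < n - 2" by simp
  obtain P where P: "finite P" "\<Union>P = {1..n}" "\<forall>B\<in>P. B \<noteq> {} \<and> qclosed Qs B"
    "\<forall>A\<in>P. \<forall>B\<in>P. A \<noteq> B \<longrightarrow> A \<inter> B = {}" "n \<le> card P + length Qs * (k-1)"
    using blocks[OF S k2] by blast
  have "3 \<le> card P" using lt P(5) by linarith
  then obtain T where T: "T \<subseteq> P" "card T = 3" by (rule obtain_subset_with_card_n)
  then obtain B1 B2 B3 where B: "T = {B1, B2, B3}" "B1 \<noteq> B2" "B2 \<noteq> B3" "B1 \<noteq> B3"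
    by (auto simp: card_3_iff)
  have BP: "B1 \<in> P" "B2 \<in> P" "B3 \<in> P" using T B by auto
  have BU: "B1 \<subseteq> {1..n}" "B2 \<subseteq> {1..n}" "B3 \<subseteq> {1..n}" using BP P(2) by blast+
  have Bne: "B1 \<noteq> {}" "B2 \<noteq> {}" "B3 \<noteq> {}" using BP P(3) by auto
  have cl: "qclosed Qs B1" "qclosed Qs B2" "qclosed Qs B3" using BP P(3) by auto
  have dis: "B1 \<inter> B2 = {}" "B1 \<inter> B3 = {}" "B2 \<inter> B3 = {}" using BP B P(4) by blast+
  have fin: "finite B1" "finite B2" "finite B3"
    by (rule finite_subset[OF BU(1)], simp) (rule finite_subset[OF BU(2)], simp, rule finite_subset[OF BU(3)], simp)
  have c1: "card B1 \<ge> 1" "card B2 \<ge> 1" "card B3 \<ge> 1" using fin Bne by (simp_all add: Suc_leI card_gt_0_iff)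
  have "card (B1 \<union> B2 \<union> B3) = card B1 + card B2 + card B3"
    using fin dis by (simp add: card_Un_disjoint Int_Un_distrib2)
  moreover have "card (B1 \<union> B2 \<union> B3) \<le> n"
  proof -
    have "B1 \<union> B2 \<union> B3 \<subseteq> {1..n}" using BU by blast
    then show ?thesis by (metis card_atLeastAtMost card_mono diff_Suc_1 finite_atLeastAtMost)
  qed
  ultimately have sum: "card B1 + card B2 + card B3 \<le> n" by simp
  from t3[OF od c1 sum] show False
  proof (elim disjE)
    assume sz: "card B1 div 2 + card B2 div 2 + 2 \<le> (n + 1) div 2"
    show False using fail_odd[OF od cl(1) cl(2) BU(1) BU(2) dis(1) Bne(1) Bne(2) sz] S by blast
  next
    assume sz: "card B1 div 2 + card B3 div 2 + 2 \<le> (n + 1) div 2"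
    show False using fail_odd[OF od cl(1) cl(3) BU(1) BU(3) dis(2) Bne(1) Bne(3) sz] S by blast
  next
    assume sz: "card B2 div 2 + card B3 div 2 + 2 \<le> (n + 1) div 2"
    show False using fail_odd[OF od cl(2) cl(3) BU(2) BU(3) dis(3) Bne(2) Bne(3) sz] S by blast
  qed
qed

lemma ceil_facts:
  fixes K x :: nat
  assumes K: "1 \<le> K" and x: "1 \<le> x"
  shows "x \<le> ((x+K-1) div K) * K" and "\<And>q. x \<le> q*K \<Longrightarrow> (x+K-1) div K \<le> q" and "1 \<le> (x+K-1) div K"
proof -
  define L where "L = (x+K-1) div K"
  define r where "r = (x+K-1) mod K"
  have d: "L*K + r = x+K-1" unfolding L_def r_def by simp
  have rK: "r < K" unfolding r_def using K by simp
  show g: "x \<le> ((x+K-1) div K) * K" using d rK unfolding L_def[symmetric] by linarith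
  show "(x+K-1) div K \<le> q" if q: "x \<le> q*K" for q
  proof (rule ccontr)
    assume "\<not> (x+K-1) div K \<le> q"
    then have "Suc q \<le> L" unfolding L_def by simp
    then have "Suc q * K \<le> L * K" by (rule mult_le_mono1)
    then show False using d q K by simp
  qed
  show "1 \<le> (x+K-1) div K"
  proof (rule ccontr)
    assume "\<not> 1 \<le> (x+K-1) div K"
    then have "(x+K-1) div K = 0" by simp
    then show False using g x by simp
  qed
qed

lemma ceil_eq:
  fixes K x :: nat
  assumes K: "1 \<le> K" and x: "1 \<le> x"
  shows "\<lceil>real x / real K\<rceil> = int ((x+K-1) div K)"
proof -
  define L where "L = (x+K-1) div K"
  have f1: "x \<le> L*K" and f2: "\<And>q. x \<le> q*K \<Longrightarrow> L \<le> q" and f3: "1 \<le> L"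
    using ceil_facts[OF K x] unfolding L_def by auto
  have Kp: "0 < real K" using K by simp
  have "real x \<le> real L * real K" using f1 by (metis of_nat_le_iff of_nat_mult)
  then have u: "real x / real K \<le> real L" using Kp by (simp add: pos_divide_le_eq)
  have "\<not> x \<le> (L-1)*K" using f2[of "L-1"] f3 by linarith
  then have "(L-1)*K < x" by simp
  then have "real (L-1) * real K < real x" by (metis of_nat_less_iff of_nat_mult)
  moreover have "real (L-1) = real L - 1" using f3 by (simp add: of_nat_diff)
  ultimately have "real L - 1 < real x / real K" using Kp by (simp add: pos_less_divide_eq)
  then show ?thesis unfolding L_def[symmetric] using u by (intro ceiling_unique) simp_all
qed

theorem theorem5:
  fixes k n :: nat
  assumes "2 \<le> k" and "k \<le> n"
  shows "real (N_OM k n) =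
           (if even n then of_int \<lceil>(real n - 1) / (real k - 1)\<rceil>
            else of_int \<lceil>(real n - 2) / (real k - 1)\<rceil>)"
proof -
  define K where "K = k - 1"
  have K1: "1 \<le> K" using assms by (simp add: K_def)
  have rk: "real k - 1 = real K" using assms by (simp add: K_def of_nat_diff)
  show ?thesis
  proof (cases "even n")
    case True
    define x where "x = n - 1"
    have x1: "1 \<le> x" using assms True unfolding x_def by presburger
    have rx: "real n - 1 = real x" using assms by (simp add: x_def of_nat_diff)
    define L where "L = (x+K-1) div K"
    have f1: "x \<le> L*K" and f2: "\<And>q. x \<le> q*K \<Longrightarrow> L \<le> q" and f3: "1 \<le> L"
      using ceil_facts[OF K1 x1] unfolding L_def by auto
    have N: "N_OM k n = L"
      unfolding N_OM_def
    proof (rule Least_equality)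
      have "n \<le> L*(k-1)+1" using f1 unfolding x_def K_def by simp
      then have "om_successful k n (chainQs k n L)" using succ_even[OF assms f3] by simp
      moreover have "length (chainQs k n L) = L" by (simp add: chainQs_def)
      ultimately show "\<exists>Qs. length Qs = L \<and> om_successful k n Qs" by blast
    next
      fix q assume "\<exists>Qs. length Qs = q \<and> om_successful k n Qs"
      then obtain Qs where Qs: "length Qs = q" "om_successful k n Qs" by blast
      have "n - 1 \<le> q * (k-1)" using lower_even[OF Qs(2) assms(1) True] Qs(1) by simp
      then show "L \<le> q" using f2 unfolding x_def K_def by simp
    qed
    show ?thesis using True N rx rk ceil_eq[OF K1 x1] unfolding L_def by simp
  next
    case False
    define x where "x = n - 2"
    have x1: "1 \<le> x" using assms False unfolding x_def by presburger
    have rx: "real n - 2 = real x" using assms by (simp add: x_def of_nat_diff)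
    define L where "L = (x+K-1) div K"
    have f1: "x \<le> L*K" and f2: "\<And>q. x \<le> q*K \<Longrightarrow> L \<le> q" and f3: "1 \<le> L"
      using ceil_facts[OF K1 x1] unfolding L_def by auto
    have N: "N_OM k n = L"
      unfolding N_OM_def
    proof (rule Least_equality)
      have "n - 1 \<le> L*(k-1)+1" using f1 unfolding x_def K_def by simp
      then have "om_successful k n (chainQs k n L)" using succ_odd[OF assms f3 _ False] by simp
      moreover have "length (chainQs k n L) = L" by (simp add: chainQs_def)
      ultimately show "\<exists>Qs. length Qs = L \<and> om_successful k n Qs" by blast
    next
      fix q assume "\<exists>Qs. length Qs = q \<and> om_successful k n Qs"
      then obtain Qs where Qs: "length Qs = q" "om_successful k n Qs" by blast
      have "n - 2 \<le> q * (k-1)" using lower_odd[OF Qs(2) assms(1) False] Qs(1) by simp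
      then show "L \<le> q" using f2 unfolding x_def K_def by simp
    qed
    show ?thesis using False N rx rk ceil_eq[OF K1 x1] unfolding L_def by simp
  qed
qed

end
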